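(* Let $p,q$ be bivariate polynomials in $(n,N)$ with nonnegative integer coefficients, both of degree $k>1$, neither depending only on $N$, with decompositions as in the context, $P_k,Q_k$ non-constant and $Q_k(0)\le P_k(0)$. Suppose there are real constants $c,r$ such that $\gamma_k(y)=cy$ and $R_k(y)=r$ for all $y\in(0,1]$. Then either $q$ and $p$ have exploding differences, or $c$ and $r$ are rational, there is a constant $d$ such that $q(cn+r,N)-p(n,N)=d$ identically in $n,N$ (so $q,p$ are $\mathbb Q$-equivalent), and for every $\delta\in(0,1)$ there are $W_\delta>0$ and $N_\delta$ such that for all $N>N_\delta$, all integers $\delta N\le n\le N$ and all $m\in\mathbb N$: either $m=cn+r$ (and then $q(m,N)-p(n,N)=d$), or $|q(m,N)-p(n,N)|\ge W_\delta N^{k-1}$.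
   Context: For $p,q$ of degree $k$ write, with $y_1=n/N$, $y_2=m/N$: $p(n,N)=\sum_{j=0}^kN^jP_j(y_1)$ and $q(m,N)=\sum_{j=0}^kN^jQ_j(y_2)$ where $P_j,Q_j$ are polynomials of degree at most $j$. Define $\gamma_k=Q_k^{-1}\circ P_k$ on $[0,\infty)$ and $R_k(y)=\big(P_{k-1}(y)-Q_{k-1}(\gamma_k(y))\big)/Q_k'(\gamma_k(y))$. The degree of a bivariate polynomial $p(x,y)$ is the degree of $p(x,x)$. Exploding differences: $q,p$ have exploding differences if for every $\delta\in(0,1)$ there are $C_\delta>0$, $N_\delta$ and sets $\Gamma_{N,\delta}\subset[1,N]$ of cardinality at most $\delta N$ such that for all $N>N_\delta$ and all integers $n\in[\delta N,N]\setminus\Gamma_{N,\delta}$, $\min_{m\in[\delta N,N]\cap\mathbb N}|q(m,N)-p(n,N)|\ge C_\delta N$. Two polynomials $q,p$ are $\mathbb Q$-equivalent if there exist rationals $c,r$ such that $q(cn+r,N)-p(n,N)$ does not depend on $n$ and $N$. *)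

theory Defs
  imports Complex_Main "HOL-Computational_Algebra.Polynomial"
begin

text \<open>A bivariate polynomial with nonnegative integer coefficients in (n,N) is
represented by its coefficient function a, with a i l the coefficient of n^i N^l
(finite support assumed separately).\<close>

definition bsupp :: "(nat \<Rightarrow> nat \<Rightarrow> nat) \<Rightarrow> (nat \<times> nat) set" where
  "bsupp a = {(i,l). a i l \<noteq> 0}"

definition bpoly :: "(nat \<Rightarrow> nat \<Rightarrow> nat) \<Rightarrow> real \<Rightarrow> real \<Rightarrow> real" where
  "bpoly a x y = (\<Sum>(i,l)\<in>bsupp a. real (a i l) * x ^ i * y ^ l)"

text \<open>The univariate polynomial p(x,x); its degree is the degree of p.\<close>
definition bdiag :: "(nat \<Rightarrow> nat \<Rightarrow> nat) \<Rightarrow> int poly" where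
  "bdiag a = (\<Sum>(i,l)\<in>bsupp a. monom (int (a i l)) (i + l))"

definition bdeg :: "(nat \<Rightarrow> nat \<Rightarrow> nat) \<Rightarrow> nat" where
  "bdeg a = degree (bdiag a)"

text \<open>P_j with p(n,N) = sum_j N^j P_j(n/N).\<close>
definition hcomp :: "(nat \<Rightarrow> nat \<Rightarrow> nat) \<Rightarrow> nat \<Rightarrow> real poly" where
  "hcomp a j = (\<Sum>i\<le>j. monom (real (a i (j - i))) i)"

definition gam :: "(nat \<Rightarrow> nat \<Rightarrow> nat) \<Rightarrow> (nat \<Rightarrow> nat \<Rightarrow> nat) \<Rightarrow> nat \<Rightarrow> real \<Rightarrow> real" where
  "gam a b k y = the_inv_into {0..} (poly (hcomp b k)) (poly (hcomp a k) y)"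

definition Rk :: "(nat \<Rightarrow> nat \<Rightarrow> nat) \<Rightarrow> (nat \<Rightarrow> nat \<Rightarrow> nat) \<Rightarrow> nat \<Rightarrow> real \<Rightarrow> real" where
  "Rk a b k y = (poly (hcomp a (k - 1)) y - poly (hcomp b (k - 1)) (gam a b k y))
                 / poly (pderiv (hcomp b k)) (gam a b k y)"

definition exploding :: "(nat \<Rightarrow> nat \<Rightarrow> nat) \<Rightarrow> (nat \<Rightarrow> nat \<Rightarrow> nat) \<Rightarrow> bool" where
  "exploding b a \<longleftrightarrow>
    (\<forall>\<delta>::real. 0 < \<delta> \<and> \<delta> < 1 \<longrightarrow>
      (\<exists>C>0. \<exists>N0::nat. \<exists>\<Gamma>::nat \<Rightarrow> nat set.
        (\<forall>N. \<Gamma> N \<subseteq> {1..N} \<and> real (card (\<Gamma> N)) \<le> \<delta> * real N) \<and>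
        (\<forall>N>N0. \<forall>n::nat. \<delta> * real N \<le> real n \<and> n \<le> N \<and> n \<notin> \<Gamma> N \<longrightarrow>
           (\<forall>m::nat. \<delta> * real N \<le> real m \<and> m \<le> N \<longrightarrow>
              \<bar>bpoly b (real m) (real N) - bpoly a (real n) (real N)\<bar> \<ge> C * real N))))"

end

theory Submission
  imports Defs
begin

lemma supp_bound:
  assumes fin: "finite (bsupp a)" and deg: "bdeg a = k" and nz: "a i l \<noteq> 0"
  shows "i + l \<le> k"
proof -
  have mem: "(i,l) \<in> bsupp a" using nz by (simp add: bsupp_def)
  have "coeff (bdiag a) (i+l) = (\<Sum>(i',l')\<in>bsupp a. (if i' + l' = i + l then int (a i' l') else 0))"
    unfolding bdiag_def coeff_sum by (intro sum.cong) (auto simp: coeff_monom)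
  also have "\<dots> \<ge> (\<lambda>(i',l'). (if i' + l' = i + l then int (a i' l') else 0)) (i,l)"
    by (rule member_le_sum[OF mem _ fin]) (auto split: prod.splits)
  finally have "coeff (bdiag a) (i+l) \<noteq> 0" using nz by simp
  then have "i + l \<le> degree (bdiag a)" by (rule le_degree)
  then show ?thesis using deg by (simp add: bdeg_def)
qed

lemma bpoly_box:
  assumes fin: "finite (bsupp a)" and deg: "bdeg a = k"
  shows "bpoly a x N = (\<Sum>(i,l)\<in>{..k}\<times>{..k}. real (a i l) * x ^ i * N ^ l)"
  unfolding bpoly_def
proof (rule sum.mono_neutral_left)
  show "bsupp a \<subseteq> {..k}\<times>{..k}"
  proof safe
    fix i l assume "(i,l) \<in> bsupp a"
    then have "i + l \<le> k" using supp_bound[OF fin deg] by (simp add: bsupp_def)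
    then show "i \<le> k" "l \<le> k" by auto
  qed
qed (auto simp: bsupp_def)

definition scalep :: "real poly \<Rightarrow> real \<Rightarrow> real poly" where
  "scalep p c = (\<Sum>s\<le>degree p. monom (coeff p s * c ^ s) s)"

lemma poly_scalep: "poly (scalep p c) y = poly p (c * y)"
  unfolding scalep_def poly_sum poly_monom poly_altdef[of p "c*y"]
  by (simp add: power_mult_distrib mult_ac)

lemma coeff_scalep: "coeff (scalep p c) s = coeff p s * c ^ s"
proof (cases "s \<le> degree p")
  case True then show ?thesis unfolding scalep_def by (rule coeff_sum_monom)
next
  case False
  then have "coeff p s = 0" by (simp add: coeff_eq_0)
  moreover have "coeff (scalep p c) s = 0" unfolding scalep_def coeff_sum
    using False by (intro sum.neutral) auto
  ultimately show ?thesis by simp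
qed

lemma coeff_hcomp: "coeff (hcomp a j) s = (if s \<le> j then real (a s (j - s)) else 0)"
proof (cases "s \<le> j")
  case True then show ?thesis unfolding hcomp_def using coeff_sum_monom[of s j "\<lambda>i. real (a i (j-i))"] by simp
next
  case False then show ?thesis by (auto simp: hcomp_def coeff_sum)
qed

lemma poly_eq_on_infinite:
  fixes p q :: "real poly"
  assumes "infinite S" and "\<forall>y\<in>S. poly p y = poly q y"
  shows "p = q"
proof (rule ccontr)
  assume "p \<noteq> q"
  then have "p - q \<noteq> 0" by simp
  then have "finite {x. poly (p - q) x = 0}" by (rule poly_roots_finite)
  moreover have "S \<subseteq> {x. poly (p - q) x = 0}" using assms(2) by auto
  ultimately show False using assms(1) finite_subset by blast
qed

lemma pow_diff_ge:
  fixes u w :: real assumes "0 \<le> w" "w \<le> u"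
  shows "u ^ Suc i - w ^ Suc i \<ge> (u - w) * u ^ i"
proof (induction i)
  case 0 then show ?case by simp
next
  case (Suc i)
  have "u ^ Suc (Suc i) - w ^ Suc (Suc i) = u * (u ^ Suc i - w ^ Suc i) + w ^ Suc i * (u - w)"
    by (simp add: algebra_simps)
  also have "\<dots> \<ge> u * ((u - w) * u ^ i) + 0"
    using Suc assms by (intro add_mono mult_left_mono mult_nonneg_nonneg) auto
  finally show ?case by (simp add: algebra_simps)
qed

lemma pow_absdiff_ge:
  fixes u w :: real assumes "0 \<le> w" "0 \<le> u" "i \<ge> 1"
  shows "\<bar>u ^ i - w ^ i\<bar> \<ge> \<bar>u - w\<bar> * max u w ^ (i - 1)"
proof -
  obtain j where i: "i = Suc j" using assms(3) by (cases i) auto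
  show ?thesis
  proof (cases "w \<le> u")
    case True
    have "w ^ i \<le> u ^ i" using True assms by (intro power_mono) auto
    then show ?thesis using pow_diff_ge[OF assms(1) True, of j] True i by (simp add: max_def)
  next
    case False
    have "u ^ i \<le> w ^ i" using False assms by (intro power_mono) auto
    then show ?thesis using pow_diff_ge[OF assms(2), of w j] False i by (simp add: max_def)
  qed
qed

lemma poly_nonneg_ge_coeff:
  fixes p :: "real poly"
  assumes nn: "\<forall>i. coeff p i \<ge> 0" and t: "t \<ge> 0"
  shows "poly p t \<ge> coeff p i * t ^ i"
proof (cases "i \<le> degree p")
  case True
  have "coeff p i * t ^ i \<le> (\<Sum>j\<le>degree p. coeff p j * t ^ j)"
    using True nn t by (intro member_le_sum[where f="\<lambda>j. coeff p j * t ^ j"]) auto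
  then show ?thesis by (simp add: poly_altdef)
next
  case False
  then have "coeff p i = 0" by (simp add: coeff_eq_0)
  moreover have "poly p t \<ge> 0" unfolding poly_altdef using nn t by (intro sum_nonneg) auto
  ultimately show ?thesis by simp
qed

lemma poly_nonneg_mono:
  fixes p :: "real poly"
  assumes nn: "\<forall>i. coeff p i \<ge> 0" and w: "0 \<le> w" "w \<le> u"
  shows "poly p u - poly p w \<ge> coeff p i * (u ^ i - w ^ i)"
proof -
  have eq: "poly p u - poly p w = (\<Sum>j\<le>degree p. coeff p j * (u ^ j - w ^ j))"
    by (simp add: poly_altdef sum_subtractf[symmetric] algebra_simps)
  have tn: "\<And>j. coeff p j * (u ^ j - w ^ j) \<ge> 0"
    using nn w by (intro mult_nonneg_nonneg) (auto intro: power_mono)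
  show ?thesis
  proof (cases "i \<le> degree p")
    case True
    then show ?thesis unfolding eq using tn
      by (intro member_le_sum[where f="\<lambda>j. coeff p j * (u ^ j - w ^ j)"]) auto
  next
    case False
    then have "coeff p i = 0" by (simp add: coeff_eq_0)
    then show ?thesis unfolding eq using tn by (simp add: sum_nonneg)
  qed
qed

lemma bpoly_lower:
  assumes fin: "finite (bsupp b)" and u: "0 \<le> u" and w: "0 \<le> w" and N: "0 \<le> N"
    and i0: "i0 \<ge> 1" and nz: "b i0 l0 \<noteq> 0"
  shows "\<bar>bpoly b u N - bpoly b w N\<bar> \<ge> real (b i0 l0) * (\<bar>u - w\<bar> * max u w ^ (i0 - 1)) * N ^ l0"
proof -
  have key: "bpoly b u N - bpoly b w N \<ge> real (b i0 l0) * (u ^ i0 - w ^ i0) * N ^ l0"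
    if uw: "0 \<le> w" "w \<le> u" for u w
  proof -
    have eq: "bpoly b u N - bpoly b w N = (\<Sum>(i,l)\<in>bsupp b. real (b i l) * (u ^ i - w ^ i) * N ^ l)"
      unfolding bpoly_def sum_subtractf[symmetric] by (intro sum.cong) (auto simp: algebra_simps)
    have "(i0,l0) \<in> bsupp b" using nz by (simp add: bsupp_def)
    moreover have "\<forall>x\<in>bsupp b. 0 \<le> (\<lambda>(i,l). real (b i l) * (u ^ i - w ^ i) * N ^ l) x"
      using uw N by (auto intro!: mult_nonneg_nonneg power_mono)
    ultimately show ?thesis unfolding eq
      using member_le_sum[of "(i0,l0)" "bsupp b" "\<lambda>(i,l). real (b i l) * (u ^ i - w ^ i) * N ^ l"] fin
      by auto
  qed
  have pa: "\<bar>u ^ i0 - w ^ i0\<bar> \<ge> \<bar>u - w\<bar> * max u w ^ (i0 - 1)"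
    using pow_absdiff_ge[OF w u i0] .
  show ?thesis
  proof (cases "w \<le> u")
    case True
    have "w ^ i0 \<le> u ^ i0" using True w by (intro power_mono) auto
    then have "real (b i0 l0) * (\<bar>u - w\<bar> * max u w ^ (i0 - 1)) * N ^ l0 \<le> real (b i0 l0) * (u ^ i0 - w ^ i0) * N ^ l0"
      using pa N by (intro mult_right_mono mult_left_mono) auto
    also have "\<dots> \<le> \<bar>bpoly b u N - bpoly b w N\<bar>" using key[OF w True] by linarith
    finally show ?thesis .
  next
    case False
    have "u ^ i0 \<le> w ^ i0" using False u by (intro power_mono) auto
    then have "real (b i0 l0) * (\<bar>u - w\<bar> * max u w ^ (i0 - 1)) * N ^ l0 \<le> real (b i0 l0) * (w ^ i0 - u ^ i0) * N ^ l0"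
      using pa N by (intro mult_right_mono mult_left_mono) auto
    also have "\<dots> \<le> \<bar>bpoly b u N - bpoly b w N\<bar>" using key[of u w] u False by linarith
    finally show ?thesis .
  qed
qed

lemma inv_poly_prop:
  fixes p :: "real poly"
  assumes nn: "\<forall>i. coeff p i \<ge> 0" and pos: "coeff p i0 > 0" and i0: "i0 \<ge> 1"
    and v: "poly p 0 \<le> v"
  shows "the_inv_into {0..} (poly p) v \<ge> 0 \<and> poly p (the_inv_into {0..} (poly p) v) = v"
proof -
  have smono: "poly p w < poly p u" if "0 \<le> w" "w < u" for u w
  proof -
    have "w ^ i0 < u ^ i0" using that i0 by (intro power_strict_mono) auto
    then have "coeff p i0 * (u ^ i0 - w ^ i0) > 0" using pos by simp
    with poly_nonneg_mono[OF nn that(1), of u i0] that show ?thesis by linarith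
  qed
  have inj: "inj_on (poly p) {0..}"
  proof (rule inj_onI)
    fix x y assume "x \<in> {0::real..}" "y \<in> {0::real..}" "poly p x = poly p y"
    then show "x = y" using smono[of x y] smono[of y x] by (cases x y rule: linorder_cases) auto
  qed
  define T where "T = max 1 (v / coeff p i0)"
  have T1: "T \<ge> 1" by (simp add: T_def)
  have "T ^ i0 \<ge> T ^ 1" using T1 i0 by (intro power_increasing) auto
  then have "coeff p i0 * T ^ i0 \<ge> coeff p i0 * (v / coeff p i0)"
    using pos T_def by (intro mult_left_mono) auto
  then have cT: "coeff p i0 * T ^ i0 \<ge> v" using pos by simp
  have "poly p T - poly p 0 \<ge> coeff p i0 * (T ^ i0 - 0 ^ i0)"
    using poly_nonneg_mono[OF nn _ _, of 0 T i0] T1 by auto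
  moreover have "poly p 0 \<ge> 0" using nn by (simp add: poly_0_coeff_0)
  ultimately have "poly p T \<ge> v" using cT i0 by (simp add: power_0_left)
  then obtain x where x: "0 \<le> x" "x \<le> T" "poly p x = v"
    using IVT'[of "poly p" 0 v T] v T1 continuous_on_poly[OF continuous_on_id] by auto
  then have vim: "v \<in> poly p ` {0..}" by auto
  show ?thesis using the_inv_into_into[OF inj vim, of "{0..}"] f_the_inv_into_f[OF inj vim] by auto
qed

lemma hcomp_nn: "\<forall>i. coeff (hcomp a j) i \<ge> 0"
  by (simp add: coeff_hcomp)

lemma core_identities:
  fixes a b :: "nat \<Rightarrow> nat \<Rightarrow> nat" and k :: nat and c r :: real
  assumes kk1: "k > 1" and Pk_nc: "degree (hcomp a k) > 0" and Qk_nc: "degree (hcomp b k) > 0"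
    and Q0P0: "poly (hcomp b k) 0 \<le> poly (hcomp a k) 0"
    and gam_lin: "\<forall>y::real. 0 < y \<and> y \<le> 1 \<longrightarrow> gam a b k y = c * y"
    and R_const: "\<forall>y::real. 0 < y \<and> y \<le> 1 \<longrightarrow> Rk a b k y = r"
  shows "c > 0"
    and "\<forall>s\<le>k. real (a s (k-s)) = real (b s (k-s)) * c ^ s"
    and "\<forall>s\<le>k-1. real (a s (k-1-s)) = real (b s (k-1-s)) * c ^ s + r * real (Suc s) * real (b (Suc s) (k-1-s)) * c ^ s"
proof -
  define Q where "Q = hcomp b k"
  define P where "P = hcomp a k"
  define i0 where "i0 = degree Q"
  have i0: "i0 \<ge> 1" using Qk_nc by (simp add: i0_def Q_def)
  have cpos: "coeff Q i0 > 0"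
  proof -
    have "Q \<noteq> 0" using Qk_nc by (auto simp: Q_def)
    then have "coeff Q i0 \<noteq> 0" by (simp add: i0_def)
    moreover have "coeff Q i0 \<ge> 0" by (simp add: Q_def coeff_hcomp)
    ultimately show ?thesis by linarith
  qed
  have gq: "gam a b k y \<ge> 0 \<and> poly Q (gam a b k y) = poly P y" if "0 \<le> y" for y
  proof -
    have "poly P y - poly P 0 \<ge> coeff P 0 * (y ^ 0 - 0 ^ 0)"
      using poly_nonneg_mono[of P 0 y 0] that by (simp add: P_def hcomp_nn)
    then have "poly Q 0 \<le> poly P y" using Q0P0 by (simp add: P_def Q_def)
    from inv_poly_prop[OF _ cpos i0 this] show ?thesis
      by (simp add: gam_def P_def Q_def hcomp_nn)
  qed
  have eq1: "poly Q (c * y) = poly P y" if "0 < y" "y \<le> 1" for y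
    using gq[of y] gam_lin that by auto
  have c0: "c \<ge> 0" using gq[of 1] gam_lin by auto
  show cpos': "c > 0"
  proof (rule ccontr)
    assume "\<not> c > 0"
    then have "c = 0" using c0 by simp
    then have "\<forall>y\<in>{0<..1}. poly P y = poly [:poly Q 0:] y" using eq1 by auto
    then have "P = [:poly Q 0:]" by (intro poly_eq_on_infinite[of "{0<..1::real}"]) auto
    then show False using Pk_nc by (simp add: P_def)
  qed
  have P_eq: "P = scalep Q c"
    by (rule poly_eq_on_infinite[of "{0<..1::real}"]) (auto simp: poly_scalep eq1)
  show "\<forall>s\<le>k. real (a s (k-s)) = real (b s (k-s)) * c ^ s"
  proof (intro allI impI)
    fix s assume "s \<le> k"
    then show "real (a s (k-s)) = real (b s (k-s)) * c ^ s"
      using arg_cong[OF P_eq, of "\<lambda>p. coeff p s"] by (simp add: P_def Q_def coeff_scalep coeff_hcomp)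
  qed
  define Q1 where "Q1 = hcomp b (k-1)"
  define P1 where "P1 = hcomp a (k-1)"
  have dpos: "poly (pderiv Q) t > 0" if "t > 0" for t
  proof -
    have nn: "\<forall>i. coeff (pderiv Q) i \<ge> 0" by (simp add: coeff_pderiv Q_def coeff_hcomp)
    have "coeff (pderiv Q) (i0 - 1) = real i0 * coeff Q i0" using i0 by (simp add: coeff_pderiv)
    then have "coeff (pderiv Q) (i0 - 1) * t ^ (i0 - 1) > 0" using cpos i0 that by simp
    with poly_nonneg_ge_coeff[OF nn, of t "i0 - 1"] that show ?thesis by linarith
  qed
  have eq2: "poly P1 y = poly (scalep Q1 c + smult r (scalep (pderiv Q) c)) y" if "y \<in> {0<..1}" for y
  proof -
    have yy: "0 < y" "y \<le> 1" using that by auto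
    have g: "gam a b k y = c * y" using gam_lin yy by auto
    have d: "poly (pderiv Q) (c * y) > 0" using dpos cpos' yy by simp
    have "(poly P1 y - poly Q1 (c*y)) / poly (pderiv Q) (c*y) = r"
      using R_const yy g by (auto simp: Rk_def P1_def Q1_def Q_def)
    then have "poly P1 y - poly Q1 (c*y) = r * poly (pderiv Q) (c*y)"
      using d by (simp add: field_simps)
    then show ?thesis by (simp add: poly_scalep)
  qed
  have P1_eq: "P1 = scalep Q1 c + smult r (scalep (pderiv Q) c)"
    by (rule poly_eq_on_infinite[of "{0<..1::real}"]) (use eq2 in auto)
  show "\<forall>s\<le>k-1. real (a s (k-1-s)) = real (b s (k-1-s)) * c ^ s + r * real (Suc s) * real (b (Suc s) (k-1-s)) * c ^ s"
  proof (intro allI impI)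
    fix s assume s: "s \<le> k-1"
    have kk: "Suc s \<le> k" "k - Suc s = k - 1 - s" using s kk1 by auto
    have "coeff P1 s = coeff (scalep Q1 c + smult r (scalep (pderiv Q) c)) s" using P1_eq by simp
    moreover have "coeff P1 s = real (a s (k-1-s))" using s by (simp add: P1_def coeff_hcomp)
    moreover have "coeff Q1 s = real (b s (k-1-s))" using s by (simp add: Q1_def coeff_hcomp)
    moreover have "coeff (pderiv Q) s = real (Suc s) * real (b (Suc s) (k-1-s))"
      unfolding coeff_pderiv Q_def coeff_hcomp using kk by simp
    ultimately show "real (a s (k-1-s)) = real (b s (k-1-s)) * c ^ s + r * real (Suc s) * real (b (Suc s) (k-1-s)) * c ^ s"
      by (simp add: coeff_scalep)
  qed
qed

definition ecoef :: "(nat \<Rightarrow> nat \<Rightarrow> nat) \<Rightarrow> (nat \<Rightarrow> nat \<Rightarrow> nat) \<Rightarrow> real \<Rightarrow> real \<Rightarrow> nat \<Rightarrow> nat \<Rightarrow> nat \<Rightarrow> real" where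
  "ecoef a b c r k s l = (\<Sum>i\<le>k. real (b i l) * real (i choose s) * c ^ s * r ^ (i - s)) - real (a s l)"

lemma bpoly_nested:
  assumes fin: "finite (bsupp a)" and deg: "bdeg a = k"
  shows "bpoly a x N = (\<Sum>i\<le>k. \<Sum>l\<le>k. real (a i l) * x ^ i * N ^ l)"
  unfolding bpoly_box[OF fin deg] sum.cartesian_product by simp

lemma binom_ext:
  assumes "i \<le> k"
  shows "(u + v::real) ^ i = (\<Sum>s\<le>k. real (i choose s) * u ^ s * v ^ (i - s))"
proof -
  have "(u + v) ^ i = (\<Sum>s\<le>i. real (i choose s) * u ^ s * v ^ (i - s))"
    by (rule binomial_ring)
  also have "\<dots> = (\<Sum>s\<le>k. real (i choose s) * u ^ s * v ^ (i - s))"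
    by (rule sum.mono_neutral_left) (use assms in auto)
  finally show ?thesis .
qed

lemma sum_swap3:
  "(\<Sum>i\<in>A. \<Sum>l\<in>B. \<Sum>s\<in>C. f i l s) = (\<Sum>s\<in>C. \<Sum>l\<in>B. \<Sum>i\<in>A. f i l s :: real)"
proof -
  have "(\<Sum>i\<in>A. \<Sum>l\<in>B. \<Sum>s\<in>C. f i l s) = (\<Sum>i\<in>A. \<Sum>s\<in>C. \<Sum>l\<in>B. f i l s)"
    by (intro sum.cong refl sum.swap)
  also have "\<dots> = (\<Sum>s\<in>C. \<Sum>i\<in>A. \<Sum>l\<in>B. f i l s)" by (rule sum.swap)
  also have "\<dots> = (\<Sum>s\<in>C. \<Sum>l\<in>B. \<Sum>i\<in>A. f i l s)"
    by (intro sum.cong refl sum.swap)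
  finally show ?thesis .
qed

lemma D_repr:
  assumes fa: "finite (bsupp a)" and da: "bdeg a = k" and fb: "finite (bsupp b)" and db: "bdeg b = k"
  shows "bpoly b (c * x + r) N - bpoly a x N = (\<Sum>s\<le>k. \<Sum>l\<le>k. ecoef a b c r k s l * x ^ s * N ^ l)"
proof -
  have "bpoly b (c * x + r) N = (\<Sum>i\<le>k. \<Sum>l\<le>k. real (b i l) * (c * x + r) ^ i * N ^ l)"
    by (rule bpoly_nested[OF fb db])
  also have "\<dots> = (\<Sum>i\<le>k. \<Sum>l\<le>k. \<Sum>s\<le>k. real (b i l) * real (i choose s) * c ^ s * r ^ (i - s) * x ^ s * N ^ l)"
  proof (intro sum.cong refl)
    fix i l assume "i \<in> {..k}" "l \<in> {..k}"
    then have "(c * x + r) ^ i = (\<Sum>s\<le>k. real (i choose s) * (c*x) ^ s * r ^ (i - s))"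
      by (intro binom_ext) auto
    then show "real (b i l) * (c * x + r) ^ i * N ^ l = (\<Sum>s\<le>k. real (b i l) * real (i choose s) * c ^ s * r ^ (i - s) * x ^ s * N ^ l)"
      by (simp add: sum_distrib_left sum_distrib_right power_mult_distrib mult_ac)
  qed
  also have "\<dots> = (\<Sum>s\<le>k. \<Sum>l\<le>k. \<Sum>i\<le>k. real (b i l) * real (i choose s) * c ^ s * r ^ (i - s) * x ^ s * N ^ l)"
    by (rule sum_swap3)
  finally have 1: "bpoly b (c * x + r) N = \<dots>" .
  have 2: "bpoly a x N = (\<Sum>s\<le>k. \<Sum>l\<le>k. real (a s l) * x ^ s * N ^ l)"
    by (rule bpoly_nested[OF fa da])
  show ?thesis unfolding 1 2 ecoef_def
    by (simp add: sum_subtractf[symmetric] sum_distrib_right left_diff_distrib)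
qed

lemma e_vanish:
  assumes sa: "\<And>i l. a i l \<noteq> 0 \<Longrightarrow> i + l \<le> k" and sb: "\<And>i l. b i l \<noteq> 0 \<Longrightarrow> i + l \<le> k"
    and k: "k > 1"
    and I1: "\<forall>s\<le>k. real (a s (k-s)) = real (b s (k-s)) * c ^ s"
    and I2: "\<forall>s\<le>k-1. real (a s (k-1-s)) = real (b s (k-1-s)) * c ^ s + r * real (Suc s) * real (b (Suc s) (k-1-s)) * c ^ s"
    and sl: "s + l \<ge> k - 1"
  shows "ecoef a b c r k s l = 0"
proof -
  define f where "f i = real (b i l) * real (i choose s) * c ^ s * r ^ (i - s)" for i
  have fz: "f i = 0" if "i \<noteq> s" "i \<noteq> Suc s" for i
  proof (cases "i < s")
    case True then show ?thesis by (simp add: f_def)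
  next
    case False
    then have "i + l > k" using that sl k by auto
    then have "b i l = 0" using sb by force
    then show ?thesis by (simp add: f_def)
  qed
  show ?thesis
  proof (cases "s + l > k")
    case True
    have "a s l = 0" using True sa by force
    moreover have "f i = 0" if "i \<le> k" for i
    proof (cases "i < s")
      case True then show ?thesis by (simp add: f_def)
    next
      case False
      then have "b i l = 0" using sb \<open>s + l > k\<close> by force
      then show ?thesis by (simp add: f_def)
    qed
    ultimately show ?thesis unfolding ecoef_def f_def[symmetric] by simp
  next
    case False
    then have "s + l = k \<or> s + l = k - 1" using sl by auto
    then show ?thesis
    proof
      assume e: "s + l = k"
      have "b (Suc s) l = 0" using sb[of "Suc s" l] e by force
      then have "f (Suc s) = 0" by (simp add: f_def)
      then have "(\<Sum>i\<le>k. f i) = (\<Sum>i\<in>{s}. f i)"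
        by (intro sum.mono_neutral_right) (use e fz in auto)
      also have "\<dots> = real (b s l) * c ^ s" by (simp add: f_def)
      also have "\<dots> = real (a s l)" using I1 e by (metis add_diff_cancel_left' le_add1)
      finally show ?thesis unfolding ecoef_def f_def[symmetric] by simp
    next
      assume e: "s + l = k - 1"
      have sk: "Suc s \<le> k" "s \<le> k - 1" "l = k - 1 - s" using e k by auto
      have "(\<Sum>i\<le>k. f i) = (\<Sum>i\<in>{s, Suc s}. f i)"
        by (intro sum.mono_neutral_right) (use sk fz in auto)
      also have "\<dots> = real (b s l) * c ^ s + real (b (Suc s) l) * real (Suc s) * c ^ s * r"
        by (simp add: f_def)
      also have "\<dots> = real (a s l)" using I2 sk by (simp add: algebra_simps)
      finally show ?thesis unfolding ecoef_def f_def[symmetric] by simp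
    qed
  qed
qed

lemma sum_bound:
  fixes g :: "nat \<Rightarrow> nat \<Rightarrow> real"
  assumes fin: "finite S" and deg: "\<forall>(s,l)\<in>S. g s l \<noteq> 0 \<longrightarrow> s + l \<le> J"
    and x: "\<bar>x\<bar> \<le> N" and N: "1 \<le> N"
  shows "\<bar>\<Sum>(s,l)\<in>S. g s l * x ^ s * N ^ l\<bar> \<le> (\<Sum>(s,l)\<in>S. \<bar>g s l\<bar>) * N ^ J"
proof -
  have "\<bar>\<Sum>(s,l)\<in>S. g s l * x ^ s * N ^ l\<bar> \<le> (\<Sum>(s,l)\<in>S. \<bar>g s l * x ^ s * N ^ l\<bar>)"
    by (rule order_trans[OF sum_abs]) (simp add: case_prod_beta)
  also have "\<dots> \<le> (\<Sum>(s,l)\<in>S. \<bar>g s l\<bar> * N ^ J)"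
  proof (rule sum_mono)
    fix p assume p: "p \<in> S"
    obtain s l where pe: "p = (s,l)" by (cases p)
    show "(case p of (s,l) \<Rightarrow> \<bar>g s l * x ^ s * N ^ l\<bar>) \<le> (case p of (s,l) \<Rightarrow> \<bar>g s l\<bar> * N ^ J)"
    proof (cases "g s l = 0")
      case True then show ?thesis by (simp add: pe)
    next
      case False
      then have sl: "s + l \<le> J" using deg p pe by auto
      have "\<bar>x\<bar> ^ s \<le> N ^ s" using x by (intro power_mono) auto
      then have "\<bar>x\<bar> ^ s * N ^ l \<le> N ^ s * N ^ l" using N by (intro mult_right_mono) auto
      also have "\<dots> = N ^ (s + l)" by (simp add: power_add)
      also have "\<dots> \<le> N ^ J" using N sl by (intro power_increasing) auto
      finally have "\<bar>x\<bar> ^ s * N ^ l \<le> N ^ J" .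
      then have "\<bar>g s l\<bar> * (\<bar>x\<bar> ^ s * N ^ l) \<le> \<bar>g s l\<bar> * N ^ J" by (intro mult_left_mono) auto
      then show ?thesis using N by (simp add: pe abs_mult power_abs mult_ac)
    qed
  qed
  also have "\<dots> = (\<Sum>(s,l)\<in>S. \<bar>g s l\<bar>) * N ^ J"
    by (simp add: sum_distrib_right case_prod_beta)
  finally show ?thesis .
qed

lemma card_interval:
  fixes A :: "nat set" and t w :: real
  assumes w: "w \<ge> 0" and A: "\<forall>n\<in>A. \<bar>real n - t\<bar> < w"
  shows "real (card A) \<le> 2 * w + 1"
proof (cases "A = {}")
  case True then show ?thesis using w by simp
next
  case False
  have fin: "finite A"
  proof (rule finite_subset)
    show "A \<subseteq> {..nat \<lceil>t + w\<rceil>}"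
    proof
      fix n assume "n \<in> A"
      then have "real n \<le> t + w" using A by force
      then have "real n \<le> real (nat \<lceil>t + w\<rceil>)" by linarith
      then show "n \<in> {..nat \<lceil>t + w\<rceil>}" by simp
    qed
  qed simp
  have sub: "A \<subseteq> {Min A..Max A}" using fin by auto
  have "card A \<le> card {Min A..Max A}" using sub by (intro card_mono) auto
  also have "\<dots> = Max A + 1 - Min A" by simp
  finally have c: "card A \<le> Max A + 1 - Min A" .
  have mm: "Min A \<le> Max A" using fin False by simp
  have "\<bar>real (Max A) - t\<bar> < w" "\<bar>real (Min A) - t\<bar> < w" using A fin False by auto
  then have "real (Max A) - real (Min A) < 2 * w" by linarith
  moreover have "real (card A) \<le> real (Max A) + 1 - real (Min A)" using c mm by linarith
  ultimately show ?thesis by linarith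
qed

lemma div_eq_diff:
  fixes x y m :: nat assumes "x div m = y div m" "x \<le> y" "m > 0"
  shows "y - x < m"
proof -
  have "y = m * (y div m) + y mod m" "x = m * (x div m) + x mod m" by simp_all
  moreover have "y mod m < m" using assms by simp
  moreover have "m * (x div m) = m * (y div m)" using assms(1) by simp
  ultimately show ?thesis using assms(2) by linarith
qed

lemma sparse_card:
  fixes A :: "nat set"
  assumes sub: "A \<subseteq> {1..N}" and gap: "\<forall>x\<in>A. \<forall>y\<in>A. x < y \<longrightarrow> y - x > L"
  shows "card A \<le> N div Suc L + 1"
proof -
  have inj: "inj_on (\<lambda>n. n div Suc L) A"
  proof (rule inj_onI)
    fix x y assume xy: "x \<in> A" "y \<in> A" "x div Suc L = y div Suc L"
    show "x = y"
    proof (rule ccontr)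
      assume "x \<noteq> y"
      then consider "x < y" | "y < x" by linarith
      then show False
      proof cases
        case 1
        then have "y - x > L" using gap xy by auto
        moreover have "y - x < Suc L" using div_eq_diff[OF xy(3)] 1 by simp
        ultimately show False by simp
      next
        case 2
        then have "x - y > L" using gap xy by auto
        moreover have "x - y < Suc L" using div_eq_diff[OF xy(3)[symmetric]] 2 by simp
        ultimately show False by simp
      qed
    qed
  qed
  have "(\<lambda>n. n div Suc L) ` A \<subseteq> {..N div Suc L}"
  proof
    fix z assume "z \<in> (\<lambda>n. n div Suc L) ` A"
    then obtain n where "n \<in> A" "z = n div Suc L" by auto
    then have "n \<le> N" using sub by auto
    then show "z \<in> {..N div Suc L}" using \<open>z = n div Suc L\<close> by (simp add: div_le_mono)
  qed
  then have "card ((\<lambda>n. n div Suc L) ` A) \<le> card {..N div Suc L}" by (intro card_mono) auto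
  then show ?thesis using card_image[OF inj] by simp
qed

lemma poly_badset:
  fixes h :: "real poly" and \<delta> :: real
  assumes h: "h \<noteq> 0" and d: "\<delta> > 0"
  shows "\<exists>\<epsilon>>0. \<exists>N1::nat. \<forall>N::nat. N \<ge> N1 \<longrightarrow>
           real (card {n\<in>{1..N}. \<bar>poly h (real n / real N)\<bar> < \<epsilon>}) \<le> \<delta> * real N"
proof -
  define Z where "Z = {z. poly h z = 0}"
  have finZ: "finite Z" using poly_roots_finite[OF h] by (simp add: Z_def)
  define m where "m = card Z"
  define \<eta> where "\<eta> = \<delta> / (4 * (real m + 1))"
  have eta: "\<eta> > 0" using d by (simp add: \<eta>_def)
  define S where "S = {0..1::real} \<inter> (\<Inter>z\<in>Z. {y. \<eta> \<le> \<bar>y - z\<bar>})"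
  have cS: "compact S" unfolding S_def
    by (intro compact_Int_closed compact_Icc closed_INT ballI closed_Collect_le continuous_intros)
  obtain \<epsilon> where e: "\<epsilon> > 0" and eS: "\<forall>y\<in>S. \<bar>poly h y\<bar> \<ge> \<epsilon>"
  proof (cases "S = {}")
    case True then show ?thesis using that[of 1] by auto
  next
    case False
    have "continuous_on S (\<lambda>y. \<bar>poly h y\<bar>)" by (intro continuous_intros)
    from continuous_attains_inf[OF cS False this] obtain y0 where
      y0: "y0 \<in> S" "\<forall>y\<in>S. \<bar>poly h y0\<bar> \<le> \<bar>poly h y\<bar>" by auto
    have "y0 \<notin> Z" using y0(1) eta by (auto simp: S_def)
    then have "\<bar>poly h y0\<bar> > 0" by (simp add: Z_def)
    then show ?thesis using that[of "\<bar>poly h y0\<bar>"] y0 by auto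
  qed
  define N1 where "N1 = nat \<lceil>2 * real m / \<delta>\<rceil> + 1"
  have "\<forall>N::nat. N \<ge> N1 \<longrightarrow> real (card {n\<in>{1..N}. \<bar>poly h (real n / real N)\<bar> < \<epsilon>}) \<le> \<delta> * real N"
  proof (intro allI impI)
    fix N :: nat assume N: "N \<ge> N1"
    have Npos: "real N > 0" using N by (simp add: N1_def)
    have Nbig: "real N \<ge> 2 * real m / \<delta>" using N unfolding N1_def by linarith
    define B where "B = {n\<in>{1..N}. \<bar>poly h (real n / real N)\<bar> < \<epsilon>}"
    define C where "C z = {n\<in>{1..N}. \<bar>real n - z * real N\<bar> < \<eta> * real N}" for z
    have BC: "B \<subseteq> (\<Union>z\<in>Z. C z)"
    proof
      fix n assume nB: "n \<in> B"
      then have n1: "n \<in> {1..N}" by (simp add: B_def)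
      have y01: "real n / real N \<in> {0..1}" using n1 Npos by auto
      have "real n / real N \<notin> S" using nB eS by (auto simp: B_def)
      then obtain z where z: "z \<in> Z" "\<bar>real n / real N - z\<bar> < \<eta>" using y01 by (auto simp: S_def not_le)
      have "\<bar>real n - z * real N\<bar> = \<bar>real n / real N - z\<bar> * real N"
        using Npos by (simp add: abs_mult[symmetric] field_simps)
      also have "\<dots> < \<eta> * real N" using z(2) Npos by simp
      finally show "n \<in> (\<Union>z\<in>Z. C z)" using z(1) n1 by (auto simp: C_def)
    qed
    have Cc: "real (card (C z)) \<le> 2 * (\<eta> * real N) + 1" for z
      by (rule card_interval) (use eta Npos in \<open>auto simp: C_def\<close>)
    have finC: "finite (C z)" for z by (rule finite_subset[of _ "{1..N}"]) (auto simp: C_def)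
    have "card B \<le> card (\<Union>z\<in>Z. C z)" using BC finZ finC by (intro card_mono) auto
    also have "\<dots> \<le> (\<Sum>z\<in>Z. card (C z))" by (rule card_UN_le[OF finZ])
    finally have "real (card B) \<le> (\<Sum>z\<in>Z. real (card (C z)))" by (simp flip: of_nat_sum)
    also have "\<dots> \<le> (\<Sum>z\<in>Z. 2 * (\<eta> * real N) + 1)" by (intro sum_mono Cc)
    also have "\<dots> = real m * (2 * (\<eta> * real N) + 1)" by (simp add: m_def)
    also have "\<dots> = real m * \<delta> * real N / (2 * (real m + 1)) + real m"
      by (simp add: \<eta>_def field_simps)
    also have "\<dots> \<le> \<delta> * real N / 2 + real m"
    proof -
      have "real m / (real m + 1) \<le> 1" by simp
      then have "real m / (real m + 1) * (\<delta> * real N / 2) \<le> 1 * (\<delta> * real N / 2)"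
        using d Npos by (intro mult_right_mono) auto
      then show ?thesis by (simp add: field_simps)
    qed
    also have "\<dots> \<le> \<delta> * real N"
    proof -
      have "\<delta> * real N \<ge> 2 * real m" using Nbig d by (simp add: field_simps)
      then show ?thesis by linarith
    qed
    finally show "real (card {n\<in>{1..N}. \<bar>poly h (real n / real N)\<bar> < \<epsilon>}) \<le> \<delta> * real N"
      by (simp add: B_def)
  qed
  then show ?thesis using e by blast
qed

lemma irr_badset:
  fixes c r \<delta> :: real
  assumes c: "c \<notin> \<rat>" and d: "\<delta> > 0"
  shows "\<exists>\<epsilon>>0. \<exists>N1::nat. \<forall>N::nat. N \<ge> N1 \<longrightarrow>
           real (card {n\<in>{1..N}. \<exists>m::int. \<bar>c * real n + r - real_of_int m\<bar> < \<epsilon>}) \<le> \<delta> * real N"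
proof -
  define L where "L = nat \<lceil>2 / \<delta>\<rceil>"
  have "0 < 2 / \<delta>" using d by simp
  then have "\<lceil>2 / \<delta>\<rceil> > 0" by (simp only: zero_less_ceiling)
  then have "0 < L" unfolding L_def by (simp only: zero_less_nat_eq)
  then have L1: "L \<ge> 1" by simp
  have Lge: "real L \<ge> 2 / \<delta>" unfolding L_def by linarith
  define f where "f h = \<bar>c * real h - of_int (round (c * real h))\<bar>" for h :: nat
  have fpos: "f h > 0" if "h \<ge> 1" for h
  proof (rule ccontr)
    assume "\<not> f h > 0"
    then have "c * real h = of_int (round (c * real h))" by (simp add: f_def)
    then have "c = of_int (round (c * real h)) / real h" using that by (simp add: field_simps)
    then have "c \<in> \<rat>" by (metis Rats_divide Rats_of_int Rats_of_nat)
    then show False using c by simp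
  qed
  define \<epsilon> where "\<epsilon> = Min (f ` {1..L}) / 2"
  have fne: "f ` {1..L} \<noteq> {}" using L1 by auto
  have "Min (f ` {1..L}) > 0" using fpos fne by (subst Min_gr_iff) auto
  then have e: "\<epsilon> > 0" unfolding \<epsilon>_def by simp
  have fe: "2 * \<epsilon> \<le> f h" if "1 \<le> h" "h \<le> L" for h
    unfolding \<epsilon>_def using that by (simp add: Min_le)
  define N1 where "N1 = nat \<lceil>2 / \<delta>\<rceil> + 1"
  have "\<forall>N::nat. N \<ge> N1 \<longrightarrow> real (card {n\<in>{1..N}. \<exists>m::int. \<bar>c * real n + r - real_of_int m\<bar> < \<epsilon>}) \<le> \<delta> * real N"
  proof (intro allI impI)
    fix N :: nat assume N: "N \<ge> N1"
    have Nbig: "real N \<ge> 2 / \<delta>" using N unfolding N1_def by linarith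
    define B where "B = {n\<in>{1..N}. \<exists>m::int. \<bar>c * real n + r - real_of_int m\<bar> < \<epsilon>}"
    have gap: "\<forall>x\<in>B. \<forall>y\<in>B. x < y \<longrightarrow> y - x > L"
    proof (intro ballI impI)
      fix x y assume xB: "x \<in> B" and yB: "y \<in> B" and xy: "x < y"
      obtain m1 :: int where m1: "\<bar>c * real x + r - m1\<bar> < \<epsilon>" using xB by (auto simp: B_def)
      obtain m2 :: int where m2: "\<bar>c * real y + r - m2\<bar> < \<epsilon>" using yB by (auto simp: B_def)
      have "\<bar>c * real (y - x) - of_int (m2 - m1)\<bar> < 2 * \<epsilon>"
        using m1 m2 xy by (simp add: of_nat_diff algebra_simps)
      moreover have "f (y - x) \<le> \<bar>c * real (y - x) - of_int (m2 - m1)\<bar>"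
        unfolding f_def by (rule round_diff_minimal)
      ultimately have "\<not> (y - x \<le> L)" using fe[of "y - x"] xy by force
      then show "y - x > L" by simp
    qed
    have "card B \<le> N div Suc L + 1" by (rule sparse_card[OF _ gap]) (auto simp: B_def)
    then have "real (card B) \<le> real (N div Suc L) + 1" by linarith
    also have "real (N div Suc L) \<le> real N / real (Suc L)" by (rule of_nat_div_le_of_nat)
    also have "real N / real (Suc L) \<le> \<delta> * real N / 2"
    proof -
      have "real (Suc L) \<ge> 2 / \<delta>" using Lge by simp
      then have "real (Suc L) * \<delta> \<ge> 2" using d by (simp add: field_simps)
      then have "2 * real N \<le> (real (Suc L) * \<delta>) * real N" by (intro mult_right_mono) auto
      then show ?thesis by (simp add: field_simps)
    qed
    finally have "real (card B) \<le> \<delta> * real N / 2 + 1" by simp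
    moreover have "\<delta> * real N \<ge> 2" using Nbig d by (simp add: field_simps)
    ultimately show "real (card {n\<in>{1..N}. \<exists>m::int. \<bar>c * real n + r - real_of_int m\<bar> < \<epsilon>}) \<le> \<delta> * real N"
      unfolding B_def by linarith
  qed
  then show ?thesis using e by blast
qed

lemma ratc_irrr:
  fixes c r :: real
  assumes c: "c \<in> \<rat>" and r: "r \<notin> \<rat>"
  shows "\<exists>\<epsilon>>0. \<forall>n::nat. \<forall>m::int. \<bar>c * real n + r - real_of_int m\<bar> \<ge> \<epsilon>"
proof -
  obtain u v :: int where v: "v > 0" and cuv: "c = of_int u / of_int v" using c by (rule Rats_cases') auto
  define g where "g = \<bar>of_int v * r - of_int (round (of_int v * r))\<bar>"
  have gpos: "g > 0"
  proof (rule ccontr)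
    assume "\<not> g > 0"
    then have "of_int v * r = of_int (round (of_int v * r))" by (simp add: g_def)
    then have "r = of_int (round (of_int v * r)) / of_int v" using v by (simp add: field_simps)
    then have "r \<in> \<rat>" by (metis Rats_divide Rats_of_int)
    then show False using r by simp
  qed
  have "\<forall>n::nat. \<forall>m::int. \<bar>c * real n + r - real_of_int m\<bar> \<ge> g / of_int v"
  proof (intro allI)
    fix n :: nat and m :: int
    have "g \<le> \<bar>of_int v * r - of_int (v * m - u * int n)\<bar>" unfolding g_def by (rule round_diff_minimal)
    also have "\<dots> = of_int v * \<bar>c * real n + r - real_of_int m\<bar>"
      using v by (simp add: cuv abs_mult[symmetric] field_simps)
    finally show "\<bar>c * real n + r - real_of_int m\<bar> \<ge> g / of_int v" using v by (simp add: field_simps)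
  qed
  then show ?thesis using gpos v by (intro exI[of _ "g / of_int v"]) auto
qed

lemma rat_sep:
  fixes c r :: real
  assumes c: "c \<in> \<rat>" and r: "r \<in> \<rat>"
  shows "\<exists>\<epsilon>>0. \<forall>n::nat. \<forall>m::int. real_of_int m = c * real n + r \<or> \<bar>c * real n + r - real_of_int m\<bar> \<ge> \<epsilon>"
proof -
  obtain u v :: int where v: "v > 0" and cuv: "c = of_int u / of_int v" using c by (rule Rats_cases') auto
  obtain s t :: int where t: "t > 0" and rst: "r = of_int s / of_int t" using r by (rule Rats_cases') auto
  have "\<forall>n::nat. \<forall>m::int. real_of_int m = c * real n + r \<or> \<bar>c * real n + r - real_of_int m\<bar> \<ge> 1 / (of_int v * of_int t)"
  proof (intro allI)
    fix n :: nat and m :: int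
    define z where "z = u * t * int n + s * v - v * t * m"
    have zeq: "real_of_int z = of_int v * of_int t * (c * real n + r - real_of_int m)"
      using v t by (simp add: z_def cuv rst field_simps)
    show "real_of_int m = c * real n + r \<or> \<bar>c * real n + r - real_of_int m\<bar> \<ge> 1 / (of_int v * of_int t)"
    proof (cases "z = 0")
      case True
      then have "of_int v * of_int t * (c * real n + r - real_of_int m) = 0" using zeq by simp
      then show ?thesis using v t by simp
    next
      case False
      then have "\<bar>real_of_int z\<bar> \<ge> 1" by linarith
      then have "of_int v * of_int t * \<bar>c * real n + r - real_of_int m\<bar> \<ge> 1"
        using zeq v t by (simp add: abs_mult)
      then show ?thesis using v t by (simp add: field_simps)
    qed
  qed
  then show ?thesis using v t by (intro exI[of _ "1 / (of_int v * of_int t)"]) auto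
qed

lemma top_hom:
  fixes g :: "nat \<Rightarrow> nat \<Rightarrow> real"
  assumes fin: "finite S" and ex: "\<exists>(s,l)\<in>S. (s,l) \<noteq> (0,0) \<and> g s l \<noteq> 0"
  shows "\<exists>h::real poly. h \<noteq> 0 \<and> (\<exists>j\<ge>1. \<exists>M'. \<forall>x N. \<bar>x\<bar> \<le> N \<longrightarrow> 1 \<le> N \<longrightarrow>
           \<bar>(\<Sum>(s,l)\<in>S. g s l * x ^ s * N ^ l) - N ^ j * poly h (x / N)\<bar> \<le> M' * N ^ (j - 1))"
proof -
  define E where "E = {(s,l)\<in>S. g s l \<noteq> 0}"
  have finE: "finite E" using fin by (rule finite_subset[rotated]) (auto simp: E_def)
  obtain s1 l1 where w: "(s1,l1) \<in> S" "(s1,l1) \<noteq> (0,0)" "g s1 l1 \<noteq> 0" using ex by auto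
  have w1: "(s1,l1) \<in> E" using w by (simp add: E_def)
  define j where "j = Max ((\<lambda>(s,l). s + l) ` E)"
  have jge: "s + l \<le> j" if "(s,l) \<in> E" for s l
    unfolding j_def using finE that by (intro Max_ge) force+
  have j1: "j \<ge> 1" using jge[OF w1] w(2) by auto
  have "j \<in> (\<lambda>(s,l). s + l) ` E" unfolding j_def using finE w1 by (intro Max_in) auto
  then obtain s0 l0 where s0: "(s0,l0) \<in> E" "s0 + l0 = j" by auto
  define S1 where "S1 = {(s,l)\<in>S. s + l = j}"
  define S2 where "S2 = S - S1"
  define h where "h = (\<Sum>(s,l)\<in>S1. monom (g s l) s)"
  have finS1: "finite S1" using fin by (rule finite_subset[rotated]) (auto simp: S1_def)
  have "coeff h s0 = (\<Sum>(s,l)\<in>S1. (if s = s0 then g s l else 0))"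
    unfolding h_def coeff_sum by (intro sum.cong) auto
  also have "\<dots> = (\<Sum>p\<in>S1. (if p = (s0,l0) then g s0 l0 else 0))"
    by (intro sum.cong) (use s0 in \<open>auto simp: S1_def split: if_splits\<close>)
  also have "\<dots> = g s0 l0" using s0 finS1 by (simp add: S1_def E_def)
  finally have "coeff h s0 \<noteq> 0" using s0 by (simp add: E_def)
  then have hnz: "h \<noteq> 0" by auto
  define M' where "M' = (\<Sum>(s,l)\<in>S2. \<bar>g s l\<bar>)"
  have main: "\<bar>(\<Sum>(s,l)\<in>S. g s l * x ^ s * N ^ l) - N ^ j * poly h (x / N)\<bar> \<le> M' * N ^ (j - 1)"
    if x: "\<bar>x\<bar> \<le> N" and N: "1 \<le> N" for x N :: real
  proof -
    have split: "(\<Sum>(s,l)\<in>S. g s l * x ^ s * N ^ l) = (\<Sum>(s,l)\<in>S1. g s l * x ^ s * N ^ l) + (\<Sum>(s,l)\<in>S2. g s l * x ^ s * N ^ l)"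
    proof -
      have "S1 \<subseteq> S" by (auto simp: S1_def)
      from sum.subset_diff[OF this fin] show ?thesis unfolding S2_def by (simp add: add.commute)
    qed
    have "N ^ j * poly h (x / N) = (\<Sum>(s,l)\<in>S1. g s l * (x / N) ^ s * N ^ j)"
      unfolding h_def poly_sum by (simp add: sum_distrib_left case_prod_beta poly_monom mult_ac)
    also have "\<dots> = (\<Sum>(s,l)\<in>S1. g s l * x ^ s * N ^ l)"
    proof (intro sum.cong refl)
      fix p assume "p \<in> S1"
      then obtain s l where p: "p = (s,l)" "s + l = j" by (auto simp: S1_def)
      have "(x / N) ^ s * N ^ j = x ^ s * N ^ l" using N p(2)
        by (auto simp: power_divide power_add field_simps)
      then show "(case p of (s,l) \<Rightarrow> g s l * (x / N) ^ s * N ^ j) = (case p of (s,l) \<Rightarrow> g s l * x ^ s * N ^ l)"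
        by (simp add: p mult.assoc)
    qed
    finally have h1: "N ^ j * poly h (x / N) = (\<Sum>(s,l)\<in>S1. g s l * x ^ s * N ^ l)" .
    have "\<forall>(s,l)\<in>S2. g s l \<noteq> 0 \<longrightarrow> s + l \<le> j - 1"
    proof (intro ballI, clarify)
      fix s l assume "(s,l) \<in> S2" "g s l \<noteq> 0"
      then have "(s,l) \<in> E" "s + l \<noteq> j" by (auto simp: S2_def S1_def E_def)
      then show "s + l \<le> j - 1" using jge by fastforce
    qed
    from sum_bound[OF _ this x N] have "\<bar>\<Sum>(s,l)\<in>S2. g s l * x ^ s * N ^ l\<bar> \<le> M' * N ^ (j - 1)"
      using fin by (simp add: M'_def S2_def)
    then show ?thesis using split h1 by simp
  qed
  show ?thesis using hnz j1 main by blast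
qed

theorem mainTheorem5:
  fixes a b :: "nat \<Rightarrow> nat \<Rightarrow> nat" and k :: nat and c r :: real
  assumes fin_p: "finite (bsupp a)" and fin_q: "finite (bsupp b)"
    and k: "k > 1" and deg_p: "bdeg a = k" and deg_q: "bdeg b = k"
    and nonN_p: "\<exists>i l. i > 0 \<and> a i l \<noteq> 0"
    and nonN_q: "\<exists>i l. i > 0 \<and> b i l \<noteq> 0"
    and Pk_nc: "degree (hcomp a k) > 0" and Qk_nc: "degree (hcomp b k) > 0"
    and Q0P0: "poly (hcomp b k) 0 \<le> poly (hcomp a k) 0"
    and gam_lin: "\<forall>y::real. 0 < y \<and> y \<le> 1 \<longrightarrow> gam a b k y = c * y"
    and R_const: "\<forall>y::real. 0 < y \<and> y \<le> 1 \<longrightarrow> Rk a b k y = r"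
  shows "exploding b a \<or>
    (c \<in> \<rat> \<and> r \<in> \<rat> \<and>
     (\<exists>d::real.
        (\<forall>x N::real. bpoly b (c * x + r) N - bpoly a x N = d) \<and>
        (\<forall>\<delta>::real. 0 < \<delta> \<and> \<delta> < 1 \<longrightarrow>
           (\<exists>W>0. \<exists>N0::nat. \<forall>N::nat. N > N0 \<longrightarrow>
              (\<forall>n::nat. \<delta> * real N \<le> real n \<and> n \<le> N \<longrightarrow>
                 (\<forall>m::nat.
                    (real m = c * real n + r \<and>
                       bpoly b (real m) (real N) - bpoly a (real n) (real N) = d) \<or>
                    \<bar>bpoly b (real m) (real N) - bpoly a (real n) (real N)\<bar>
                       \<ge> W * real N ^ (k - 1)))))))"
proof -
  have sa: "\<And>i l. a i l \<noteq> 0 \<Longrightarrow> i + l \<le> k" using supp_bound[OF fin_p deg_p] by blast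
  have sb: "\<And>i l. b i l \<noteq> 0 \<Longrightarrow> i + l \<le> k" using supp_bound[OF fin_q deg_q] by blast
  note ci = core_identities[OF k Pk_nc Qk_nc Q0P0 gam_lin R_const]
  have cpos: "c > 0" using ci(1) .
  define e where "e = ecoef a b c r k"
  have ev: "\<And>s l. s + l \<ge> k - 1 \<Longrightarrow> e s l = 0"
    unfolding e_def using e_vanish[OF sa sb k ci(2) ci(3)] by blast
  define Bx where "Bx = {..k} \<times> {..k}"
  have finBx: "finite Bx" by (simp add: Bx_def)
  define D where "D x N = bpoly b (c * x + r) N - bpoly a x N" for x N
  have Drep: "\<And>x N. D x N = (\<Sum>(s,l)\<in>Bx. e s l * x ^ s * N ^ l)"
    unfolding D_def Bx_def e_def D_repr[OF fin_p deg_p fin_q deg_q] sum.cartesian_product by simp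
  define M where "M = (\<Sum>(s,l)\<in>Bx. \<bar>e s l\<bar>)"
  have M0: "M \<ge> 0" unfolding M_def by (intro sum_nonneg) auto
  have Dbound: "\<bar>D x N\<bar> \<le> M * N ^ (k - 2)" if x: "\<bar>x\<bar> \<le> N" and N: "1 \<le> N" for x N
  proof -
    have "\<forall>(s,l)\<in>Bx. e s l \<noteq> 0 \<longrightarrow> s + l \<le> k - 2"
    proof (intro ballI, clarify)
      fix s l assume "e s l \<noteq> 0"
      then have "\<not> s + l \<ge> k - 1" using ev by blast
      then show "s + l \<le> k - 2" by simp
    qed
    from sum_bound[OF finBx this x N] show ?thesis unfolding Drep M_def .
  qed
  define i0 where "i0 = degree (hcomp b k)"
  have i01: "i0 \<ge> 1" using Qk_nc by (simp add: i0_def)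
  have "hcomp b k \<noteq> 0" using Qk_nc by auto
  then have "coeff (hcomp b k) i0 \<noteq> 0" by (simp add: i0_def)
  then have i0k: "i0 \<le> k" and bnz: "b i0 (k - i0) \<noteq> 0" by (auto simp: coeff_hcomp split: if_splits)
  define l0 where "l0 = k - i0"
  have il: "i0 - 1 + l0 = k - 1" using i01 i0k by (simp add: l0_def)
  define K0 where "K0 = real (b i0 l0)"
  have K0: "K0 > 0" using bnz by (simp add: K0_def l0_def)
  have LB: "\<exists>N2::nat. \<forall>N::nat. N > N2 \<longrightarrow> (\<forall>n::nat. \<delta> * real N \<le> real n \<longrightarrow> n \<le> N \<longrightarrow>
      (\<forall>m::nat. \<bar>real m - (c * real n + r)\<bar> \<ge> \<epsilon> \<longrightarrow>
        \<bar>bpoly b (real m) (real N) - bpoly a (real n) (real N)\<bar> \<ge> (K0 * \<epsilon> * (c * \<delta> / 2) ^ (i0 - 1) / 2) * real N ^ (k - 1)))"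
    if d: "0 < \<delta>" and ep: "0 < \<epsilon>" for \<delta> \<epsilon> :: real
  proof -
    define A where "A = K0 * \<epsilon> * (c * \<delta> / 2) ^ (i0 - 1)"
    have A: "A > 0" using K0 ep cpos d by (simp add: A_def)
    define N2 where "N2 = nat \<lceil>2 * \<bar>r\<bar> / (c * \<delta>) + 2 * M / A\<rceil> + 1"
    have "\<forall>N::nat. N > N2 \<longrightarrow> (\<forall>n::nat. \<delta> * real N \<le> real n \<longrightarrow> n \<le> N \<longrightarrow>
      (\<forall>m::nat. \<bar>real m - (c * real n + r)\<bar> \<ge> \<epsilon> \<longrightarrow>
        \<bar>bpoly b (real m) (real N) - bpoly a (real n) (real N)\<bar> \<ge> (A / 2) * real N ^ (k - 1)))"
    proof (intro allI impI)
      fix N n m :: nat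
      assume N: "N > N2" and n1: "\<delta> * real N \<le> real n" and n2: "n \<le> N"
        and m: "\<bar>real m - (c * real n + r)\<bar> \<ge> \<epsilon>"
      have t1: "2 * \<bar>r\<bar> / (c * \<delta>) \<ge> 0" using cpos d by simp
      have t2: "2 * M / A \<ge> 0" using M0 A by simp
      have Nb: "real N \<ge> 2 * \<bar>r\<bar> / (c * \<delta>) + 2 * M / A + 1" using N unfolding N2_def by linarith
      have N1: "real N \<ge> 1" using Nb t1 t2 by linarith
      have "real N \<ge> 2 * \<bar>r\<bar> / (c * \<delta>)" using Nb t2 by linarith
      then have Nr: "real N * (c * \<delta>) \<ge> 2 * \<bar>r\<bar>"
        using cpos d by (simp add: pos_divide_le_eq)
      have "real N \<ge> 2 * M / A" using Nb t1 by linarith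
      then have NM: "real N * A \<ge> 2 * M"
        using A by (simp add: pos_divide_le_eq)
      define w where "w = c * real n + r"
      have "c * real n \<ge> c * (\<delta> * real N)" using n1 cpos by (intro mult_left_mono) auto
      then have w: "w \<ge> c * \<delta> * real N / 2" using Nr unfolding w_def by (simp add: field_simps)
      have w0: "w \<ge> 0" using w cpos d N1 by (smt (verit) mult_pos_pos zero_less_divide_iff)
      have "max (real m) w ^ (i0 - 1) \<ge> (c * \<delta> * real N / 2) ^ (i0 - 1)"
        using w cpos d N1 by (intro power_mono) auto
      then have "\<bar>real m - w\<bar> * max (real m) w ^ (i0 - 1) \<ge> \<epsilon> * (c * \<delta> * real N / 2) ^ (i0 - 1)"
        using m ep cpos d N1 unfolding w_def by (intro mult_mono) auto
      then have "K0 * (\<bar>real m - w\<bar> * max (real m) w ^ (i0 - 1)) * real N ^ l0 \<ge>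
                 K0 * (\<epsilon> * (c * \<delta> * real N / 2) ^ (i0 - 1)) * real N ^ l0"
        using K0 by (intro mult_right_mono mult_left_mono) auto
      also have "K0 * (\<epsilon> * (c * \<delta> * real N / 2) ^ (i0 - 1)) * real N ^ l0 = A * real N ^ (k - 1)"
        unfolding A_def il[symmetric] power_add by (simp add: power_mult_distrib power_divide field_simps)
      finally have q1: "\<bar>bpoly b (real m) (real N) - bpoly b w (real N)\<bar> \<ge> A * real N ^ (k - 1)"
        using bpoly_lower[OF fin_q _ w0 _ i01, of "real m" "real N" l0] bnz
        unfolding K0_def l0_def by auto
      have "\<bar>D (real n) (real N)\<bar> \<le> M * real N ^ (k - 2)" using n2 N1 by (intro Dbound) auto
      also have "\<dots> \<le> (A / 2) * real N ^ (k - 1)"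
      proof -
        have kk: "k - 1 = Suc (k - 2)" using k by simp
        have "real N ^ (k - 1) = real N * real N ^ (k - 2)" unfolding kk by (rule power_Suc)
        moreover have "M * real N ^ (k - 2) \<le> (real N * A / 2) * real N ^ (k - 2)"
          using NM by (intro mult_right_mono) auto
        ultimately show ?thesis by (simp add: mult_ac)
      qed
      finally have q2: "\<bar>D (real n) (real N)\<bar> \<le> (A / 2) * real N ^ (k - 1)" .
      have "bpoly b (real m) (real N) - bpoly a (real n) (real N) =
            (bpoly b (real m) (real N) - bpoly b w (real N)) + D (real n) (real N)"
        by (simp add: D_def w_def mult.commute)
      then show "\<bar>bpoly b (real m) (real N) - bpoly a (real n) (real N)\<bar> \<ge> (A / 2) * real N ^ (k - 1)"
        using q1 q2 by linarith
    qed
    then show ?thesis unfolding A_def by blast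
  qed
  have powN: "real N ^ (k - 1) \<ge> real N" if "real N \<ge> 1" for N :: nat
  proof -
    have "real N ^ 1 \<le> real N ^ (k - 1)" using that k by (intro power_increasing) auto
    then show ?thesis by simp
  qed
  have EX: "exploding b a"
    if H: "\<forall>\<delta>. 0 < \<delta> \<and> \<delta> < 1 \<longrightarrow> (\<exists>\<epsilon>>0. \<exists>C1>0. \<exists>N1::nat. \<exists>\<Gamma>::nat\<Rightarrow>nat set.
       (\<forall>N. \<Gamma> N \<subseteq> {1..N} \<and> real (card (\<Gamma> N)) \<le> \<delta> * real N) \<and>
       (\<forall>N>N1. \<forall>n::nat. \<delta> * real N \<le> real n \<and> n \<le> N \<and> n \<notin> \<Gamma> N \<longrightarrow>
          (\<forall>m::nat. \<bar>real m - (c * real n + r)\<bar> \<ge> \<epsilon> \<or>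
             (real m = c * real n + r \<and> \<bar>D (real n) (real N)\<bar> \<ge> C1 * real N))))"
  unfolding exploding_def
  proof (intro allI impI)
    fix \<delta> :: real assume d: "0 < \<delta> \<and> \<delta> < 1"
    obtain \<epsilon> C1 N1 \<Gamma> where ep: "\<epsilon> > 0" and C1: "C1 > 0"
      and G1: "\<forall>N. \<Gamma> N \<subseteq> {1..N} \<and> real (card (\<Gamma> N)) \<le> \<delta> * real N"
      and G2: "\<forall>N>N1. \<forall>n::nat. \<delta> * real N \<le> real n \<and> n \<le> N \<and> n \<notin> \<Gamma> N \<longrightarrow>
          (\<forall>m::nat. \<bar>real m - (c * real n + r)\<bar> \<ge> \<epsilon> \<or>
             (real m = c * real n + r \<and> \<bar>D (real n) (real N)\<bar> \<ge> C1 * real N))"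
      using H[rule_format, OF d] by blast
    define A where "A = K0 * \<epsilon> * (c * \<delta> / 2) ^ (i0 - 1) / 2"
    have A: "A > 0" using K0 ep cpos d by (simp add: A_def)
    obtain N2 where N2: "\<forall>N::nat. N > N2 \<longrightarrow> (\<forall>n::nat. \<delta> * real N \<le> real n \<longrightarrow> n \<le> N \<longrightarrow>
      (\<forall>m::nat. \<bar>real m - (c * real n + r)\<bar> \<ge> \<epsilon> \<longrightarrow>
        \<bar>bpoly b (real m) (real N) - bpoly a (real n) (real N)\<bar> \<ge> A * real N ^ (k - 1)))"
      using LB[of \<delta> \<epsilon>] d ep unfolding A_def by blast
    define C where "C = min C1 A"
    have C: "C > 0" using C1 A by (simp add: C_def)
    have "\<forall>N>max N1 N2. \<forall>n::nat. \<delta> * real N \<le> real n \<and> n \<le> N \<and> n \<notin> \<Gamma> N \<longrightarrow>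
           (\<forall>m::nat. \<delta> * real N \<le> real m \<and> m \<le> N \<longrightarrow>
              \<bar>bpoly b (real m) (real N) - bpoly a (real n) (real N)\<bar> \<ge> C * real N)"
    proof (intro allI impI, elim conjE)
      fix N n m :: nat
      assume N: "N > max N1 N2" and n1: "\<delta> * real N \<le> real n" and n2: "n \<le> N" and nG: "n \<notin> \<Gamma> N"
      have NN: "real N \<ge> 1" using N by simp
      from G2 N n1 n2 nG have alt: "\<bar>real m - (c * real n + r)\<bar> \<ge> \<epsilon> \<or>
             (real m = c * real n + r \<and> \<bar>D (real n) (real N)\<bar> \<ge> C1 * real N)" by auto
      then show "\<bar>bpoly b (real m) (real N) - bpoly a (real n) (real N)\<bar> \<ge> C * real N"
      proof
        assume "\<bar>real m - (c * real n + r)\<bar> \<ge> \<epsilon>"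
        then have "\<bar>bpoly b (real m) (real N) - bpoly a (real n) (real N)\<bar> \<ge> A * real N ^ (k - 1)"
          using N2 N n1 n2 by auto
        moreover have "A * real N ^ (k - 1) \<ge> C * real N"
          using powN[OF NN] A C by (intro mult_mono) (auto simp: C_def)
        ultimately show ?thesis by linarith
      next
        assume "real m = c * real n + r \<and> \<bar>D (real n) (real N)\<bar> \<ge> C1 * real N"
        moreover have "C1 * real N \<ge> C * real N" by (intro mult_right_mono) (auto simp: C_def)
        ultimately show ?thesis by (simp add: D_def mult.commute)
      qed
    qed
    then show "\<exists>C>0. \<exists>N0::nat. \<exists>\<Gamma>::nat \<Rightarrow> nat set.
        (\<forall>N. \<Gamma> N \<subseteq> {1..N} \<and> real (card (\<Gamma> N)) \<le> \<delta> * real N) \<and>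
        (\<forall>N>N0. \<forall>n::nat. \<delta> * real N \<le> real n \<and> n \<le> N \<and> n \<notin> \<Gamma> N \<longrightarrow>
           (\<forall>m::nat. \<delta> * real N \<le> real m \<and> m \<le> N \<longrightarrow>
              \<bar>bpoly b (real m) (real N) - bpoly a (real n) (real N)\<bar> \<ge> C * real N))"
      using C G1 by blast
  qed
  show ?thesis
  proof (cases "c \<in> \<rat> \<and> r \<in> \<rat> \<and> (\<forall>(s,l)\<in>Bx. (s,l) \<noteq> (0,0) \<longrightarrow> e s l = 0)")
    case True
    then have cQ: "c \<in> \<rat>" and rQ: "r \<in> \<rat>" and ez: "\<forall>(s,l)\<in>Bx. (s,l) \<noteq> (0,0) \<longrightarrow> e s l = 0"
      by auto
    define d where "d = e 0 0"
    have Dc: "D x N = d" for x N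
    proof -
      have "D x N = (\<Sum>(s,l)\<in>{(0,0)}. e s l * x ^ s * N ^ l)"
        unfolding Drep
      proof (rule sum.mono_neutral_right[OF finBx])
        show "{(0,0)} \<subseteq> Bx" by (simp add: Bx_def)
        show "\<forall>p\<in>Bx - {(0,0)}. (case p of (s,l) \<Rightarrow> e s l * x ^ s * N ^ l) = 0"
        proof
          fix p assume p: "p \<in> Bx - {(0,0)}"
          obtain s l where pe: "p = (s,l)" by (cases p)
          have "e s l = 0" using ez p pe by auto
          then show "(case p of (s,l) \<Rightarrow> e s l * x ^ s * N ^ l) = 0" by (simp add: pe)
        qed
      qed
      then show ?thesis by (simp add: d_def)
    qed
    obtain \<epsilon> where ep: "\<epsilon> > 0" and sep: "\<forall>n::nat. \<forall>m::int. real_of_int m = c * real n + r \<or> \<bar>c * real n + r - real_of_int m\<bar> \<ge> \<epsilon>"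
      using rat_sep[OF cQ rQ] by blast
    have W: "\<forall>\<delta>::real. 0 < \<delta> \<and> \<delta> < 1 \<longrightarrow>
           (\<exists>W>0. \<exists>N0::nat. \<forall>N::nat. N > N0 \<longrightarrow>
              (\<forall>n::nat. \<delta> * real N \<le> real n \<and> n \<le> N \<longrightarrow>
                 (\<forall>m::nat.
                    (real m = c * real n + r \<and>
                       bpoly b (real m) (real N) - bpoly a (real n) (real N) = d) \<or>
                    \<bar>bpoly b (real m) (real N) - bpoly a (real n) (real N)\<bar>
                       \<ge> W * real N ^ (k - 1))))"
    proof (intro allI impI)
      fix \<delta> :: real assume d: "0 < \<delta> \<and> \<delta> < 1"
      define W where "W = K0 * \<epsilon> * (c * \<delta> / 2) ^ (i0 - 1) / 2"
      have Wp: "W > 0" using K0 ep cpos d by (simp add: W_def)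
      obtain N2 where N2: "\<forall>N::nat. N > N2 \<longrightarrow> (\<forall>n::nat. \<delta> * real N \<le> real n \<longrightarrow> n \<le> N \<longrightarrow>
        (\<forall>m::nat. \<bar>real m - (c * real n + r)\<bar> \<ge> \<epsilon> \<longrightarrow>
          \<bar>bpoly b (real m) (real N) - bpoly a (real n) (real N)\<bar> \<ge> W * real N ^ (k - 1)))"
        using LB[of \<delta> \<epsilon>] d ep unfolding W_def by blast
      have "\<forall>N::nat. N > N2 \<longrightarrow>
              (\<forall>n::nat. \<delta> * real N \<le> real n \<and> n \<le> N \<longrightarrow>
                 (\<forall>m::nat.
                    (real m = c * real n + r \<and>
                       bpoly b (real m) (real N) - bpoly a (real n) (real N) = d) \<or>
                    \<bar>bpoly b (real m) (real N) - bpoly a (real n) (real N)\<bar>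
                       \<ge> W * real N ^ (k - 1)))"
      proof (intro allI impI, elim conjE)
        fix N n m :: nat
        assume N: "N > N2" and n1: "\<delta> * real N \<le> real n" and n2: "n \<le> N"
        show "(real m = c * real n + r \<and>
                       bpoly b (real m) (real N) - bpoly a (real n) (real N) = d) \<or>
                    \<bar>bpoly b (real m) (real N) - bpoly a (real n) (real N)\<bar>
                       \<ge> W * real N ^ (k - 1)"
        proof (cases "real m = c * real n + r")
          case True
          then show ?thesis using Dc[of "real n" "real N"] by (simp add: D_def mult.commute)
        next
          case False
          then have "\<bar>c * real n + r - real_of_int (int m)\<bar> \<ge> \<epsilon>" using spec[OF spec[OF sep, of n], of "int m"] by simp
          then have "\<bar>real m - (c * real n + r)\<bar> \<ge> \<epsilon>" by (simp add: abs_minus_commute)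
          then show ?thesis using N2 N n1 n2 by auto
        qed
      qed
      then show "\<exists>W>0. \<exists>N0::nat. \<forall>N::nat. N > N0 \<longrightarrow>
              (\<forall>n::nat. \<delta> * real N \<le> real n \<and> n \<le> N \<longrightarrow>
                 (\<forall>m::nat.
                    (real m = c * real n + r \<and>
                       bpoly b (real m) (real N) - bpoly a (real n) (real N) = d) \<or>
                    \<bar>bpoly b (real m) (real N) - bpoly a (real n) (real N)\<bar>
                       \<ge> W * real N ^ (k - 1)))" using Wp by blast
    qed
    have "\<forall>x N::real. bpoly b (c * x + r) N - bpoly a x N = d" using Dc by (simp add: D_def)
    then show ?thesis using cQ rQ W by blast
  next
    case False
    show ?thesis
    proof (rule disjI1, rule EX, intro allI impI)
      fix \<delta> :: real assume d: "0 < \<delta> \<and> \<delta> < 1"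
      have npos: "n \<ge> 1" if "\<delta> * real N \<le> real n" "N \<ge> 1" for n N :: nat
      proof -
        have "\<delta> * real N > 0" using d that(2) by simp
        then show ?thesis using that(1) by simp
      qed
      consider (irr) "c \<notin> \<rat>" | (ri) "c \<in> \<rat>" "r \<notin> \<rat>"
        | (nc) "c \<in> \<rat>" "r \<in> \<rat>" "\<exists>(s,l)\<in>Bx. (s,l) \<noteq> (0,0) \<and> e s l \<noteq> 0"
        using False by blast
      then show "\<exists>\<epsilon>>0. \<exists>C1>0. \<exists>N1::nat. \<exists>\<Gamma>::nat\<Rightarrow>nat set.
       (\<forall>N. \<Gamma> N \<subseteq> {1..N} \<and> real (card (\<Gamma> N)) \<le> \<delta> * real N) \<and>
       (\<forall>N>N1. \<forall>n::nat. \<delta> * real N \<le> real n \<and> n \<le> N \<and> n \<notin> \<Gamma> N \<longrightarrow>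
          (\<forall>m::nat. \<bar>real m - (c * real n + r)\<bar> \<ge> \<epsilon> \<or>
             (real m = c * real n + r \<and> \<bar>D (real n) (real N)\<bar> \<ge> C1 * real N)))"
      proof cases
        case irr
        obtain \<epsilon> N1' where ep: "\<epsilon> > 0" and cb: "\<forall>N::nat. N \<ge> N1' \<longrightarrow>
           real (card {n\<in>{1..N}. \<exists>m::int. \<bar>c * real n + r - real_of_int m\<bar> < \<epsilon>}) \<le> \<delta> * real N"
          using irr_badset[OF irr, of \<delta> r] d by blast
        define \<Gamma> where "\<Gamma> N = (if N \<ge> N1' then {n\<in>{1..N}. \<exists>m::int. \<bar>c * real n + r - real_of_int m\<bar> < \<epsilon>} else {})" for N
        have G1: "\<forall>N. \<Gamma> N \<subseteq> {1..N} \<and> real (card (\<Gamma> N)) \<le> \<delta> * real N"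
          using cb d by (auto simp: \<Gamma>_def)
        have G2: "\<forall>N>N1'. \<forall>n::nat. \<delta> * real N \<le> real n \<and> n \<le> N \<and> n \<notin> \<Gamma> N \<longrightarrow>
          (\<forall>m::nat. \<bar>real m - (c * real n + r)\<bar> \<ge> \<epsilon> \<or>
             (real m = c * real n + r \<and> \<bar>D (real n) (real N)\<bar> \<ge> 1 * real N))"
        proof (intro allI impI, elim conjE)
          fix N n m :: nat
          assume N: "N > N1'" and n1: "\<delta> * real N \<le> real n" and n2: "n \<le> N" and nG: "n \<notin> \<Gamma> N"
          have "n \<ge> 1" using npos[OF n1] N by simp
          then have "\<not> (\<exists>m::int. \<bar>c * real n + r - real_of_int m\<bar> < \<epsilon>)" using nG N n2 by (auto simp: \<Gamma>_def)
          then have "\<bar>c * real n + r - real_of_int (int m)\<bar> \<ge> \<epsilon>" by (meson not_le)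
          then show "\<bar>real m - (c * real n + r)\<bar> \<ge> \<epsilon> \<or>
             (real m = c * real n + r \<and> \<bar>D (real n) (real N)\<bar> \<ge> 1 * real N)"
            by (simp add: abs_minus_commute)
        qed
        show ?thesis
          apply (rule exI[of _ \<epsilon>], rule conjI[OF ep])
          apply (rule exI[of _ 1], rule conjI, simp)
          apply (rule exI[of _ N1'], rule exI[of _ \<Gamma>])
          by (rule conjI[OF G1 G2])
      next
        case ri
        obtain \<epsilon> where ep: "\<epsilon> > 0" and sep: "\<forall>n::nat. \<forall>m::int. \<bar>c * real n + r - real_of_int m\<bar> \<ge> \<epsilon>"
          using ratc_irrr[OF ri] by blast
        have G2: "\<forall>N>0. \<forall>n::nat. \<delta> * real N \<le> real n \<and> n \<le> N \<and> n \<notin> {} \<longrightarrow>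
          (\<forall>m::nat. \<bar>real m - (c * real n + r)\<bar> \<ge> \<epsilon> \<or>
             (real m = c * real n + r \<and> \<bar>D (real n) (real N)\<bar> \<ge> 1 * real N))"
        proof (intro allI impI)
          fix N n m :: nat
          have "\<bar>c * real n + r - real_of_int (int m)\<bar> \<ge> \<epsilon>" using sep by blast
          then show "\<bar>real m - (c * real n + r)\<bar> \<ge> \<epsilon> \<or>
             (real m = c * real n + r \<and> \<bar>D (real n) (real N)\<bar> \<ge> 1 * real N)"
            by (simp add: abs_minus_commute)
        qed
        have G1: "\<forall>N. (\<lambda>N::nat. {}::nat set) N \<subseteq> {1..N} \<and> real (card ((\<lambda>N::nat. {}::nat set) N)) \<le> \<delta> * real N"
          using d by simp
        show ?thesis
          apply (rule exI[of _ \<epsilon>], rule conjI[OF ep])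
          apply (rule exI[of _ 1], rule conjI, simp)
          apply (rule exI[of _ 0], rule exI[of _ "\<lambda>N::nat. {}::nat set"])
          by (rule conjI[OF G1 G2])
      next
        case nc
        obtain h where hnz: "h \<noteq> 0" and hj: "\<exists>j\<ge>1. \<exists>M'. \<forall>x N. \<bar>x\<bar> \<le> N \<longrightarrow> 1 \<le> N \<longrightarrow>
           \<bar>(\<Sum>(s,l)\<in>Bx. e s l * x ^ s * N ^ l) - N ^ j * poly h (x / N)\<bar> \<le> M' * N ^ (j - 1)"
          using top_hom[OF finBx nc(3)] by blast
        obtain j M' where j1: "j \<ge> 1" and hb: "\<forall>x N. \<bar>x\<bar> \<le> N \<longrightarrow> 1 \<le> N \<longrightarrow>
           \<bar>D x N - N ^ j * poly h (x / N)\<bar> \<le> M' * N ^ (j - 1)"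
          using hj unfolding Drep[symmetric] by blast
        obtain \<epsilon>h N1h where eh: "\<epsilon>h > 0" and cb: "\<forall>N::nat. N \<ge> N1h \<longrightarrow>
           real (card {n\<in>{1..N}. \<bar>poly h (real n / real N)\<bar> < \<epsilon>h}) \<le> \<delta> * real N"
          using poly_badset[OF hnz, of \<delta>] d by blast
        obtain \<epsilon> where ep: "\<epsilon> > 0" and sep: "\<forall>n::nat. \<forall>m::int. real_of_int m = c * real n + r \<or> \<bar>c * real n + r - real_of_int m\<bar> \<ge> \<epsilon>"
          using rat_sep[OF nc(1,2)] by blast
        define \<Gamma> where "\<Gamma> N = (if N \<ge> N1h then {n\<in>{1..N}. \<bar>poly h (real n / real N)\<bar> < \<epsilon>h} else {})" for N
        have G1: "\<forall>N. \<Gamma> N \<subseteq> {1..N} \<and> real (card (\<Gamma> N)) \<le> \<delta> * real N"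
          using cb d by (auto simp: \<Gamma>_def)
        define N1 where "N1 = max N1h (nat \<lceil>2 * \<bar>M'\<bar> / \<epsilon>h\<rceil>)"
        have G2: "\<forall>N>N1. \<forall>n::nat. \<delta> * real N \<le> real n \<and> n \<le> N \<and> n \<notin> \<Gamma> N \<longrightarrow>
          (\<forall>m::nat. \<bar>real m - (c * real n + r)\<bar> \<ge> \<epsilon> \<or>
             (real m = c * real n + r \<and> \<bar>D (real n) (real N)\<bar> \<ge> (\<epsilon>h / 2) * real N))"
        proof (intro allI impI, elim conjE)
          fix N n m :: nat
          assume N: "N > N1" and n1: "\<delta> * real N \<le> real n" and n2: "n \<le> N" and nG: "n \<notin> \<Gamma> N"
          have NN: "real N \<ge> 1" using N by simp
          have "n \<ge> 1" using npos[OF n1] N by simp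
          then have hge: "\<bar>poly h (real n / real N)\<bar> \<ge> \<epsilon>h" using nG N n2 by (auto simp: \<Gamma>_def N1_def)
          have "real N \<ge> 2 * \<bar>M'\<bar> / \<epsilon>h" using N unfolding N1_def by linarith
          then have NM: "real N * \<epsilon>h \<ge> 2 * \<bar>M'\<bar>" using eh by (simp add: pos_divide_le_eq)
          have dist: "\<bar>D (real n) (real N) - real N ^ j * poly h (real n / real N)\<bar> \<le> M' * real N ^ (j - 1)"
            using hb n2 NN by auto
          define P where "P = real N ^ (j - 1)"
          have P1: "P \<ge> 1" using NN by (simp add: P_def)
          have Nj: "real N ^ j = real N * P" using j1 unfolding P_def by (metis One_nat_def Suc_pred' less_eq_Suc_le power_Suc)
          have "\<bar>real N ^ j * poly h (real n / real N)\<bar> \<ge> real N * P * \<epsilon>h"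
          proof -
            have "\<bar>real N ^ j * poly h (real n / real N)\<bar> = (real N * P) * \<bar>poly h (real n / real N)\<bar>"
              using NN P1 unfolding Nj by (simp add: abs_mult)
            moreover have "(real N * P) * \<epsilon>h \<le> (real N * P) * \<bar>poly h (real n / real N)\<bar>"
              using NN P1 hge by (intro mult_left_mono) auto
            ultimately show ?thesis by simp
          qed
          then have "\<bar>D (real n) (real N)\<bar> \<ge> real N * P * \<epsilon>h - M' * P" using dist[folded P_def] by linarith
          moreover have "real N * P * \<epsilon>h - M' * P \<ge> P * (real N * \<epsilon>h / 2)"
          proof -
            have "M' * P \<le> (real N * \<epsilon>h / 2) * P" using NM P1 by (intro mult_right_mono) auto
            then show ?thesis by (simp add: algebra_simps)
          qed
          moreover have "P * (real N * \<epsilon>h / 2) \<ge> 1 * (real N * \<epsilon>h / 2)"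
            using P1 NN eh by (intro mult_right_mono) auto
          ultimately have "\<bar>D (real n) (real N)\<bar> \<ge> 1 * (real N * \<epsilon>h / 2)" by linarith
          then have Db: "\<bar>D (real n) (real N)\<bar> \<ge> (\<epsilon>h / 2) * real N" by (simp add: mult.commute)
          show "\<bar>real m - (c * real n + r)\<bar> \<ge> \<epsilon> \<or>
             (real m = c * real n + r \<and> \<bar>D (real n) (real N)\<bar> \<ge> (\<epsilon>h / 2) * real N)"
          proof (cases "real m = c * real n + r")
            case True then show ?thesis using Db by simp
          next
            case False
            then have "\<bar>c * real n + r - real_of_int (int m)\<bar> \<ge> \<epsilon>" using spec[OF spec[OF sep, of n], of "int m"] by simp
            then show ?thesis by (simp add: abs_minus_commute)
          qed
        qed
        have eh2: "\<epsilon>h / 2 > 0" using eh by simp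
        show ?thesis
          apply (rule exI[of _ \<epsilon>], rule conjI[OF ep])
          apply (rule exI[of _ "\<epsilon>h / 2"], rule conjI[OF eh2])
          apply (rule exI[of _ N1], rule exI[of _ \<Gamma>])
          by (rule conjI[OF G1 G2])
      qed
    qed
  qed
qed

end
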